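(* Let $p$ be a prime, let $P$ be a finite $p$-group, and let $a\in P$ have order $p$. Assume there exists an elementary abelian subgroup of $P$ which is normalized but not centralized by $a$. Then there is an elementary abelian subgroup $X$ of $P$ of order $p^2$ such that $|a^P\cap X|=p$ and $X\cap P'\neq 1$.
   Context: $a^P$ denotes the conjugacy class of $a$ in $P$, and $P'$ the derived subgroup of $P$. *)

theory Defs
  imports "HOL-Algebra.Algebra"
begin

definition elem_abelian_subgroup :: "('a, 'b) monoid_scheme \<Rightarrow> nat \<Rightarrow> 'a set \<Rightarrow> bool" where
  "elem_abelian_subgroup G p E \<longleftrightarrow> subgroup E G
     \<and> (\<forall>x\<in>E. \<forall>y\<in>E. x \<otimes>\<^bsub>G\<^esub> y = y \<otimes>\<^bsub>G\<^esub> x)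
     \<and> (\<forall>x\<in>E. x [^]\<^bsub>G\<^esub> p = \<one>\<^bsub>G\<^esub>)"

definition normalizes :: "('a, 'b) monoid_scheme \<Rightarrow> 'a \<Rightarrow> 'a set \<Rightarrow> bool" where
  "normalizes G a E \<longleftrightarrow> (\<lambda>x. a \<otimes>\<^bsub>G\<^esub> x \<otimes>\<^bsub>G\<^esub> inv\<^bsub>G\<^esub> a) ` E = E"

definition centralizes :: "('a, 'b) monoid_scheme \<Rightarrow> 'a \<Rightarrow> 'a set \<Rightarrow> bool" where
  "centralizes G a E \<longleftrightarrow> (\<forall>x\<in>E. a \<otimes>\<^bsub>G\<^esub> x = x \<otimes>\<^bsub>G\<^esub> a)"

definition conj_class :: "('a, 'b) monoid_scheme \<Rightarrow> 'a \<Rightarrow> 'a set" where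
  "conj_class G a = {g \<otimes>\<^bsub>G\<^esub> a \<otimes>\<^bsub>G\<^esub> inv\<^bsub>G\<^esub> g | g. g \<in> carrier G}"

end

theory Submission
  imports Defs
begin


lemma (in group_action) fixpoints_mod:
  assumes fin: "finite (carrier G)" "finite E" and p: "Factorial_Ring.prime (p::nat)" and ord: "order G = p ^ n"
  shows "card E mod p = card {x\<in>E. \<forall>g\<in>carrier G. \<phi> g x = x} mod p"
proof -
  define F where "F = {x\<in>E. \<forall>g\<in>carrier G. \<phi> g x = x}"
  have finorb: "finite (orbits G E \<phi>)"
    using fin(2) unfolding orbits_def by simp
  have cE: "card E = (\<Sum>orb\<in>orbits G E \<phi>. card orb)"
  proof -
    have "(\<Sum>orb\<in>orbits G E \<phi>. \<Sum>x\<in>orb. (1::nat)) = (\<Sum>x\<in>E. 1)"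
      using disjoint_sum[OF fin(2)] by blast
    then show ?thesis by simp
  qed
  have cF: "card F = (\<Sum>orb\<in>orbits G E \<phi>. card (orb \<inter> F))"
  proof -
    have "card F = (\<Sum>x\<in>E. if x \<in> F then 1 else 0)"
      using card_as_sums[of F E "\<lambda>x. x \<in> F"] fin(2) F_def by auto
    also have "\<dots> = (\<Sum>orb\<in>orbits G E \<phi>. \<Sum>x\<in>orb. if x \<in> F then 1 else 0)"
      using disjoint_sum[OF fin(2), of "\<lambda>x. if x \<in> F then (1::nat) else 0"] by (rule sym)
    also have "\<dots> = (\<Sum>orb\<in>orbits G E \<phi>. card (orb \<inter> F))"
    proof (rule sum.cong[OF refl])
      fix orb assume "orb \<in> orbits G E \<phi>"
      then have "finite orb" using orbits_coverture fin(2) by (metis Union_upper finite_subset)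
      then show "(\<Sum>x\<in>orb. if x \<in> F then 1 else 0) = card (orb \<inter> F)"
        by (simp add: sum.If_cases)
    qed
    finally show ?thesis .
  qed
  have key: "card orb mod p = card (orb \<inter> F) mod p" if orb: "orb \<in> orbits G E \<phi>" for orb
  proof -
    obtain x where x: "x \<in> E" and ox: "orb = orbit G \<phi> x" using orb unfolding orbits_def by blast
    have sub: "orb \<subseteq> E" using orb orbits_coverture by blast
    have "card orb dvd p ^ n"
      using orbit_stabilizer_theorem[OF x] ox ord by (metis dvd_triv_left)
    then obtain m where "normalize (card orb) = p ^ m" using divides_primepow[OF p] by blast
    then have m: "card orb = p ^ m" by simp
    show ?thesis
    proof (cases "m = 0")
      case True
      then have "card orb = 1" using m by simp
      moreover have "x \<in> orb" using orbit_refl[OF x] ox by simp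
      ultimately have o1: "orb = {x}" by (metis card_1_singletonE singletonD)
      have "\<phi> g x = x" if "g \<in> carrier G" for g
        using o1 ox that unfolding orbit_def by blast
      then have "x \<in> F" using x F_def by blast
      then show ?thesis using o1 by simp
    next
      case False
      have "orb \<inter> F = {}"
      proof (rule ccontr)
        assume "orb \<inter> F \<noteq> {}"
        then obtain y where y: "y \<in> orb" "y \<in> F" by blast
        have yE: "y \<in> E" using y sub by blast
        have "orb \<subseteq> {y}"
        proof
          fix z assume "z \<in> orb"
          then obtain g where g: "g \<in> carrier G" "z = \<phi> g x" using ox unfolding orbit_def by blast
          have "x \<in> orbit G \<phi> y" using orbit_sym[OF x yE] y ox by simp
          then obtain h where "h \<in> carrier G" "x = \<phi> h y" unfolding orbit_def by blast
          then have "x = y" using y F_def by simp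
          then show "z \<in> {y}" using g y F_def by simp
        qed
        then have "card orb \<le> 1" using card_mono[of "{y}" orb] by simp
        moreover have "p ^ m \<ge> p" using False p prime_gt_1_nat[of p]
          using power_increasing[of 1 m p] by simp
        ultimately show False using m prime_gt_1_nat[OF p] by simp
      qed
      moreover have "card orb mod p = 0" using m False by simp
      ultimately show ?thesis by simp
    qed
  qed
  have "card E mod p = (\<Sum>orb\<in>orbits G E \<phi>. card orb mod p) mod p"
    using cE by (simp add: mod_sum_eq)
  also have "\<dots> = (\<Sum>orb\<in>orbits G E \<phi>. card (orb \<inter> F) mod p) mod p"
    using key by (metis (no_types, lifting) sum.cong)
  also have "\<dots> = card F mod p" using cF by (simp add: mod_sum_eq)
  finally show ?thesis unfolding F_def .
qed



primrec zeta :: "('a, 'b) monoid_scheme \<Rightarrow> nat \<Rightarrow> 'a set" where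
  "zeta G 0 = {\<one>\<^bsub>G\<^esub>}"
| "zeta G (Suc k) = {x \<in> carrier G. \<forall>g\<in>carrier G.
      inv\<^bsub>G\<^esub> x \<otimes>\<^bsub>G\<^esub> inv\<^bsub>G\<^esub> g \<otimes>\<^bsub>G\<^esub> x \<otimes>\<^bsub>G\<^esub> g \<in> zeta G k}"

context group begin

lemma gcancel1 [simp]: "x \<in> carrier G \<Longrightarrow> y \<in> carrier G \<Longrightarrow> x \<otimes> (inv x \<otimes> y) = y"
  by (simp add: m_assoc[symmetric])
lemma gcancel2 [simp]: "x \<in> carrier G \<Longrightarrow> y \<in> carrier G \<Longrightarrow> inv x \<otimes> (x \<otimes> y) = y"
  by (simp add: m_assoc[symmetric])

lemma zeta_carrier: "zeta G k \<subseteq> carrier G"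
  by (cases k) auto

lemma zeta_conj: "x \<in> zeta G k \<Longrightarrow> h \<in> carrier G \<Longrightarrow> h \<otimes> x \<otimes> inv h \<in> zeta G k"
proof (induction k arbitrary: x h)
  case 0
  then show ?case by simp
next
  case (Suc k)
  have x: "x \<in> carrier G" using Suc.prems by simp
  have "inv (h \<otimes> x \<otimes> inv h) \<otimes> inv g \<otimes> (h \<otimes> x \<otimes> inv h) \<otimes> g \<in> zeta G k"
    if g: "g \<in> carrier G" for g
  proof -
    define g' where "g' = inv h \<otimes> g \<otimes> h"
    have g': "g' \<in> carrier G" using g Suc.prems g'_def by simp
    have "inv x \<otimes> inv g' \<otimes> x \<otimes> g' \<in> zeta G k" using Suc.prems g' by simp
    then have "h \<otimes> (inv x \<otimes> inv g' \<otimes> x \<otimes> g') \<otimes> inv h \<in> zeta G k"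
      using Suc.IH Suc.prems by blast
    moreover have "h \<otimes> (inv x \<otimes> inv g' \<otimes> x \<otimes> g') \<otimes> inv h
        = inv (h \<otimes> x \<otimes> inv h) \<otimes> inv g \<otimes> (h \<otimes> x \<otimes> inv h) \<otimes> g"
      using x g Suc.prems unfolding g'_def by (simp add: m_assoc inv_mult_group)
    ultimately show ?thesis by simp
  qed
  then show ?case using x Suc.prems by simp
qed

lemma zeta_subgroup: "subgroup (zeta G k) G"
proof (induction k)
  case 0
  then show ?case using triv_subgroup by simp
next
  case (Suc k)
  note IH = Suc.IH
  interpret Z: subgroup "zeta G k" G by (rule IH)
  show ?case
  proof (rule subgroupI)
    show "zeta G (Suc k) \<subseteq> carrier G" by auto
    show "zeta G (Suc k) \<noteq> {}"
    proof -
      have "\<one> \<in> zeta G (Suc k)" by simp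
      then show ?thesis by blast
    qed
  next
    fix x assume xz: "x \<in> zeta G (Suc k)"
    then have x: "x \<in> carrier G" by simp
    have "inv (inv x) \<otimes> inv g \<otimes> inv x \<otimes> g \<in> zeta G k" if g: "g \<in> carrier G" for g
    proof -
      have "inv x \<otimes> inv g \<otimes> x \<otimes> g \<in> zeta G k" using xz g by simp
      then have "x \<otimes> (inv x \<otimes> inv g \<otimes> x \<otimes> g) \<otimes> inv x \<in> zeta G k"
        using zeta_conj x by blast
      then have "inv (x \<otimes> (inv x \<otimes> inv g \<otimes> x \<otimes> g) \<otimes> inv x) \<in> zeta G k"
        by (rule Z.m_inv_closed)
      moreover have "inv (x \<otimes> (inv x \<otimes> inv g \<otimes> x \<otimes> g) \<otimes> inv x) = inv (inv x) \<otimes> inv g \<otimes> inv x \<otimes> g"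
        using x g by (simp add: m_assoc inv_mult_group)
      ultimately show ?thesis by simp
    qed
    then show "inv x \<in> zeta G (Suc k)" using x by simp
  next
    fix x y assume xz: "x \<in> zeta G (Suc k)" and yz: "y \<in> zeta G (Suc k)"
    then have x: "x \<in> carrier G" and y: "y \<in> carrier G" by auto
    have "inv (x \<otimes> y) \<otimes> inv g \<otimes> (x \<otimes> y) \<otimes> g \<in> zeta G k" if g: "g \<in> carrier G" for g
    proof -
      have u: "inv x \<otimes> inv g \<otimes> x \<otimes> g \<in> zeta G k" using xz g by simp
      have v: "inv y \<otimes> inv g \<otimes> y \<otimes> g \<in> zeta G k" using yz g by simp
      have "inv y \<otimes> (inv x \<otimes> inv g \<otimes> x \<otimes> g) \<otimes> inv (inv y) \<in> zeta G k"
        using zeta_conj u y by blast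
      then have "(inv y \<otimes> (inv x \<otimes> inv g \<otimes> x \<otimes> g) \<otimes> inv (inv y)) \<otimes> (inv y \<otimes> inv g \<otimes> y \<otimes> g) \<in> zeta G k"
        using v by (rule Z.m_closed)
      moreover have "(inv y \<otimes> (inv x \<otimes> inv g \<otimes> x \<otimes> g) \<otimes> inv (inv y)) \<otimes> (inv y \<otimes> inv g \<otimes> y \<otimes> g)
          = inv (x \<otimes> y) \<otimes> inv g \<otimes> (x \<otimes> y) \<otimes> g"
        using x y g by (simp add: m_assoc inv_mult_group)
      ultimately show ?thesis by simp
    qed
    then show "x \<otimes> y \<in> zeta G (Suc k)" using x y by simp
  qed
qed

lemma zeta_mono: "zeta G k \<subseteq> zeta G (Suc k)"
proof (induction k)
  case 0
  then show ?case by auto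
next
  case (Suc k)
  then show ?case by auto
qed

lemma zeta_normal: "zeta G k \<lhd> G"
  using zeta_subgroup zeta_conj normal_inv_iff by blast

end


context group begin

lemma zeta_grow:
  assumes fin: "finite (carrier G)" and p: "Factorial_Ring.prime (p::nat)" and ord: "order G = p ^ n"
    and ne: "zeta G k \<noteq> carrier G"
  shows "\<exists>x\<in>zeta G (Suc k). x \<notin> zeta G k"
proof -
  define Z where "Z = zeta G k"
  interpret N: normal Z G unfolding Z_def by (rule zeta_normal)
  define Q where "Q = G Mod Z"
  have gQ: "group Q" unfolding Q_def by (rule N.factorgroup_is_group)
  have cQ: "carrier Q = rcosets Z" unfolding Q_def FactGroup_def by simp
  have lag: "card (rcosets Z) * card Z = p ^ n"
    using lagrange[OF N.subgroup_axioms] ord by simp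
  have finQ: "finite (carrier Q)" using cQ rcosets_subset_PowG[OF N.subgroup_axioms] fin finite_subset by (metis finite_Pow_iff)
  have "card (rcosets Z) dvd p ^ n" using lag by (metis dvd_triv_left)
  then obtain m where "normalize (card (rcosets Z)) = p ^ m" using divides_primepow[OF p] by blast
  then have m: "card (rcosets Z) = p ^ m" by simp
  have m0: "m \<noteq> 0"
  proof
    assume "m = 0"
    then have "card Z = card (carrier G)" using lag m ord unfolding order_def by simp
    then have "Z = carrier G" using card_subset_eq[OF fin N.subset] by simp
    then show False using ne Z_def by simp
  qed
  have ordQ: "order Q = p ^ m" unfolding order_def using cQ m by simp
  interpret QG: group Q by (rule gQ)
  have act: "group_action Q (carrier Q) (\<lambda>g. \<lambda>h\<in>carrier Q. g \<otimes>\<^bsub>Q\<^esub> h \<otimes>\<^bsub>Q\<^esub> inv\<^bsub>Q\<^esub> g)"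
    by (rule QG.action_by_conjugation)
  define F where "F = {x\<in>carrier Q. \<forall>g\<in>carrier Q. (\<lambda>h\<in>carrier Q. g \<otimes>\<^bsub>Q\<^esub> h \<otimes>\<^bsub>Q\<^esub> inv\<^bsub>Q\<^esub> g) x = x}"
  have "card (carrier Q) mod p = card F mod p"
    using group_action.fixpoints_mod[OF act finQ finQ p ordQ] unfolding F_def .
  then have Fmod: "card F mod p = 0" using ordQ m0 unfolding order_def by simp
  have ZF: "Z \<in> F"
  proof -
    have "Z = \<one>\<^bsub>Q\<^esub>" unfolding Q_def by simp
    then show ?thesis unfolding F_def using QG.one_closed by (simp add: restrict_def)
  qed
  have finF: "finite F" using finQ unfolding F_def by simp
  have "card F \<noteq> 1" using Fmod prime_gt_1_nat[OF p] by auto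
  have "\<not> F \<subseteq> {Z}"
  proof
    assume "F \<subseteq> {Z}"
    then have "F = {Z}" using ZF by blast
    then show False using \<open>card F \<noteq> 1\<close> by simp
  qed
  then obtain XX where XF: "XX \<in> F" and XZ: "XX \<noteq> Z" by blast
  have "XX \<in> rcosets Z" using XF cQ F_def by simp
  then obtain x where x: "x \<in> carrier G" and Xx: "XX = Z #> x" unfolding RCOSETS_def by blast
  have xZ: "x \<notin> Z"
  proof
    assume "x \<in> Z"
    then have "XX = Z" using coset_join2[OF x N.subgroup_axioms] Xx by simp
    then show False using XZ by simp
  qed
  have comm: "inv x \<otimes> inv g \<otimes> x \<otimes> g \<in> Z" if g: "g \<in> carrier G" for g
  proof -
    have ig: "inv g \<in> carrier G" using g by simp
    have gQ': "Z #> inv g \<in> carrier Q" using cQ ig rcosetsI[OF N.subset] by simp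
    have "(Z #> inv g) \<otimes>\<^bsub>Q\<^esub> XX \<otimes>\<^bsub>Q\<^esub> inv\<^bsub>Q\<^esub> (Z #> inv g) = XX"
    proof -
      have XQ: "XX \<in> carrier Q" using XF unfolding F_def by blast
      have "(\<lambda>h\<in>carrier Q. (Z #> inv g) \<otimes>\<^bsub>Q\<^esub> h \<otimes>\<^bsub>Q\<^esub> inv\<^bsub>Q\<^esub> (Z #> inv g)) XX = XX"
        using XF gQ' unfolding F_def by blast
      then show ?thesis using XQ by (simp only: restrict_apply' )
    qed
    moreover have "inv\<^bsub>Q\<^esub> (Z #> inv g) = Z #> g"
      using N.inv_FactGroup[of "Z #> inv g"] gQ' N.rcos_inv[OF ig] g unfolding Q_def by simp
    ultimately have "(Z #> inv g) <#> (Z #> x) <#> (Z #> g) = Z #> x"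
      using Xx unfolding Q_def by simp
    then have "Z #> (inv g \<otimes> x \<otimes> g) = Z #> x"
      using N.rcos_sum x g ig by simp
    then have "inv g \<otimes> x \<otimes> g \<in> Z #> x"
      using rcos_self[OF _ N.subgroup_axioms, of "inv g \<otimes> x \<otimes> g"] x g by simp
    then have "(inv g \<otimes> x \<otimes> g) \<otimes> inv x \<in> Z"
      using N.rcos_module_imp[OF is_group x] by simp
    then have "inv x \<otimes> ((inv g \<otimes> x \<otimes> g) \<otimes> inv x) \<otimes> inv (inv x) \<in> Z"
      using zeta_conj[of _ k "inv x"] x unfolding Z_def by simp
    then show ?thesis using x g by (simp add: m_assoc)
  qed
  have "x \<in> zeta G (Suc k)" using x comm unfolding Z_def by simp
  then show ?thesis using xZ Z_def by blast
qed

lemma zeta_card: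
  assumes fin: "finite (carrier G)" and p: "Factorial_Ring.prime (p::nat)" and ord: "order G = p ^ n"
  shows "zeta G k = carrier G \<or> card (zeta G k) \<ge> Suc k"
proof (induction k)
  case 0
  then show ?case by simp
next
  case (Suc k)
  show ?case
  proof (cases "zeta G k = carrier G")
    case True
    then have "zeta G (Suc k) = carrier G" using zeta_mono[of k] zeta_carrier[of "Suc k"] by blast
    then show ?thesis by simp
  next
    case False
    then have c: "card (zeta G k) \<ge> Suc k" using Suc.IH by simp
    obtain x where "x \<in> zeta G (Suc k)" "x \<notin> zeta G k" using zeta_grow[OF fin p ord False] by blast
    then have "zeta G k \<subset> zeta G (Suc k)" using zeta_mono[of k] by blast
    moreover have "finite (zeta G (Suc k))" using fin zeta_carrier finite_subset by blast
    ultimately have "card (zeta G k) < card (zeta G (Suc k))" by (rule psubset_card_mono[rotated])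
    then show ?thesis using c by simp
  qed
qed

lemma zeta_top:
  assumes fin: "finite (carrier G)" and p: "Factorial_Ring.prime (p::nat)" and ord: "order G = p ^ n"
  shows "\<exists>N. zeta G N = carrier G"
proof -
  have "card (zeta G (card (carrier G))) \<le> card (carrier G)"
    using card_mono[OF fin zeta_carrier] by simp
  then show ?thesis using zeta_card[OF fin p ord, of "card (carrier G)"] by auto
qed

end


context group begin

lemma gl_cancel [simp]: "x \<in> carrier G \<Longrightarrow> y \<in> carrier G \<Longrightarrow> z \<in> carrier G \<Longrightarrow> x \<otimes> y = x \<otimes> z \<longleftrightarrow> y = z"
  by (metis gcancel2)

lemma sub_pow_closed: "subgroup H G \<Longrightarrow> x \<in> H \<Longrightarrow> x [^] (n::nat) \<in> H"
  by (induction n) (auto simp: subgroup.one_closed subgroup.m_closed)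

lemma pow_mod_p: "x \<in> carrier G \<Longrightarrow> x [^] (p::nat) = \<one> \<Longrightarrow> x [^] n = x [^] (n mod p)"
proof -
  assume x: "x \<in> carrier G" and xp: "x [^] p = \<one>"
  have "x [^] n = x [^] (p * (n div p) + n mod p)" by simp
  also have "\<dots> = (x [^] p) [^] (n div p) \<otimes> x [^] (n mod p)"
    using x by (simp add: nat_pow_mult nat_pow_pow)
  also have "\<dots> = x [^] (n mod p)" using xp x by simp
  finally show ?thesis .
qed

lemma pow_inj_lt:
  assumes x: "x \<in> carrier G" and o: "ord x = p" and i: "i < p" and j: "j < p" and e: "x [^] (i::nat) = x [^] j"
  shows "i = j"
proof -
  have aux: "i = j" if ij: "i \<le> j" "j < p" "x [^] (i::nat) = x [^] j" for i j
  proof -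
    have "x [^] j = x [^] i \<otimes> x [^] (j - i)" using x ij nat_pow_mult[of x i "j - i"] by simp
    then have "x [^] (j - i) = \<one>" using ij x by simp
    then have "p dvd j - i" using pow_eq_id[OF x] o by simp
    then show ?thesis using ij by (metis diff_is_0_eq diff_less_Suc le_antisym less_Suc_eq_le nat_dvd_not_less not_le zero_less_diff less_imp_diff_less)
  qed
  show ?thesis using aux[of i j] aux[of j i] i j e by (cases "i \<le> j") auto
qed

lemma sub_pow_back:
  assumes H: "subgroup H G" and x: "x \<in> carrier G" and o: "ord x = p" and p: "Factorial_Ring.prime p"
    and t: "0 < t" "t < p" and xt: "x [^] (t::nat) \<in> H"
  shows "x \<in> H"
proof -
  have "coprime t p" using p t by (simp add: prime_imp_coprime_nat coprime_commute nat_dvd_not_less)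
  then have g: "gcd t p = 1" by simp
  obtain u v where uv: "t * u = p * v + gcd t p" using bezout_nat[of t p] t by auto
  have "x [^] (t * u) = x [^] (p * v + 1)" using uv g by simp
  also have "\<dots> = (x [^] p) [^] v \<otimes> x" using x by (simp add: nat_pow_mult[symmetric] nat_pow_pow)
  also have "\<dots> = x" using x o pow_ord_eq_1[OF x] by simp
  finally have "x = (x [^] t) [^] u" using x by (simp add: nat_pow_pow)
  then show ?thesis using sub_pow_closed[OF H xt, of u] by simp
qed

lemma comm_pow1: "x \<in> carrier G \<Longrightarrow> y \<in> carrier G \<Longrightarrow> x \<otimes> y = y \<otimes> x \<Longrightarrow> x \<otimes> y [^] (n::nat) = y [^] n \<otimes> x"
proof (induction n)
  case 0 then show ?case by simp
next
  case (Suc n)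
  have "x \<otimes> y [^] Suc n = (x \<otimes> y [^] n) \<otimes> y" using Suc.prems by (simp add: m_assoc)
  also have "\<dots> = y [^] n \<otimes> (x \<otimes> y)" using Suc by (simp add: m_assoc)
  also have "\<dots> = y [^] Suc n \<otimes> x" using Suc.prems by (simp add: m_assoc)
  finally show ?case .
qed

lemma comm_pow: "x \<in> carrier G \<Longrightarrow> y \<in> carrier G \<Longrightarrow> x \<otimes> y = y \<otimes> x \<Longrightarrow> x [^] (m::nat) \<otimes> y [^] (n::nat) = y [^] n \<otimes> x [^] m"
  by (metis comm_pow1 nat_pow_closed)

end


theorem lemma2p3:
  fixes P (structure) and p :: nat and a
  assumes "Factorial_Ring.prime p"
    and "group P"
    and "finite (carrier P)"
    and "\<exists>n. order P = p ^ n"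
    and "a \<in> carrier P"
    and "group.ord P a = p"
    and "\<exists>E. elem_abelian_subgroup P p E \<and> normalizes P a E \<and> \<not> centralizes P a E"
  shows "\<exists>Q. elem_abelian_subgroup P p Q \<and> card Q = p ^ 2
           \<and> card (conj_class P a \<inter> Q) = p
           \<and> Q \<inter> derived P (carrier P) \<noteq> {\<one>\<^bsub>P\<^esub>}"
proof -
  interpret group P by (rule assms(2))
  have p: "Factorial_Ring.prime p" by (rule assms(1))
  have p1: "1 < p" using prime_gt_1_nat[OF p] .
  have fin: "finite (carrier P)" by (rule assms(3))
  obtain n where ordP: "order P = p ^ n" using assms(4) by blast
  have a: "a \<in> carrier P" by (rule assms(5))
  have oa: "ord a = p" by (rule assms(6))
  have ap: "a [^] p = \<one>" using pow_ord_eq_1[OF a] oa by simp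
  have a1: "a \<noteq> \<one>" using ord_eq_1[OF a] oa p1 by auto
  obtain E where Eab: "elem_abelian_subgroup P p E" and nE: "normalizes P a E"
    and ncE: "\<not> centralizes P a E" using assms(7) by blast
  have sE: "subgroup E P" and commE: "\<And>x y. x \<in> E \<Longrightarrow> y \<in> E \<Longrightarrow> x \<otimes> y = y \<otimes> x"
    and expE: "\<And>x. x \<in> E \<Longrightarrow> x [^] p = \<one>"
    using Eab unfolding elem_abelian_subgroup_def by auto
  have Esub: "E \<subseteq> carrier P" using sE subgroup.subset by blast
  have sig: "inv a \<otimes> w \<otimes> a \<in> E" if w: "w \<in> E" for w
  proof -
    have "w \<in> (\<lambda>x. a \<otimes> x \<otimes> inv a) ` E" using nE w unfolding normalizes_def by simp
    then obtain y where y: "y \<in> E" "w = a \<otimes> y \<otimes> inv a" by blast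
    have "inv a \<otimes> w \<otimes> a = y" using y a Esub by (auto simp: m_assoc)
    then show ?thesis using y by simp
  qed
  define del where "del w = inv a \<otimes> w \<otimes> a \<otimes> inv w" for w
  have del_comm: "a \<otimes> w = w \<otimes> a" if w: "w \<in> carrier P" and d: "del w = \<one>" for w
  proof -
    have "inv a \<otimes> w \<otimes> a = w"
      using d w a unfolding del_def by (metis inv_solve_right' l_one m_closed inv_closed)
    then have "a \<otimes> (inv a \<otimes> w \<otimes> a) = a \<otimes> w" by simp
    then show ?thesis using w a by (simp add: m_assoc)
  qed
  have exw: "\<exists>w\<in>E. del w \<noteq> \<one>"
  proof (rule ccontr)
    assume "\<not> ?thesis"
    then have "\<forall>x\<in>E. a \<otimes> x = x \<otimes> a" using del_comm Esub by blast
    then show False using ncE unfolding centralizes_def by blast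
  qed
  obtain N where zN: "zeta P N = carrier P" using zeta_top[OF fin p ordP] by blast
  define J where "J = (LEAST j. \<exists>w\<in>E \<inter> zeta P j. del w \<noteq> \<one>)"
  have exJ: "\<exists>j. \<exists>w\<in>E \<inter> zeta P j. del w \<noteq> \<one>" using exw zN Esub by blast
  obtain w where wE: "w \<in> E" and wz: "w \<in> zeta P J" and dw: "del w \<noteq> \<one>"
    using LeastI_ex[OF exJ] unfolding J_def by blast
  have w: "w \<in> carrier P" using wE Esub by blast
  have J0: "J \<noteq> 0"
  proof
    assume "J = 0"
    then have "w = \<one>" using wz by simp
    then show False using dw a unfolding del_def by simp
  qed
  define c where "c = del w"
  have c: "c \<in> carrier P" using a w unfolding c_def del_def by simp
  have cE: "c \<in> E"
    unfolding c_def del_def using sig[OF wE] subgroup.m_closed[OF sE] subgroup.m_inv_closed[OF sE wE] by blast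
  have cz: "c \<in> zeta P (J - 1)"
  proof -
    have "w \<in> zeta P (Suc (J - 1))" using wz J0 by simp
    then have "inv w \<otimes> inv a \<otimes> w \<otimes> a \<in> zeta P (J - 1)" using a by simp
    then have "w \<otimes> (inv w \<otimes> inv a \<otimes> w \<otimes> a) \<otimes> inv w \<in> zeta P (J - 1)"
      using zeta_conj w by blast
    moreover have "w \<otimes> (inv w \<otimes> inv a \<otimes> w \<otimes> a) \<otimes> inv w = c"
      unfolding c_def del_def using w a by (simp add: m_assoc)
    ultimately show ?thesis by simp
  qed
  have dc: "del c = \<one>"
  proof (rule ccontr)
    assume "del c \<noteq> \<one>"
    then have "\<exists>w\<in>E \<inter> zeta P (J - 1). del w \<noteq> \<one>" using cE cz by blast
    then have "J \<le> J - 1" unfolding J_def by (rule Least_le)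
    then show False using J0 by simp
  qed
  have ac: "a \<otimes> c = c \<otimes> a" using del_comm[OF c dc] .
  have c1: "c \<noteq> \<one>" using dw c_def by simp
  have cp: "c [^] p = \<one>" using expE[OF cE] .
  have oc: "ord c = p"
  proof -
    have "ord c dvd p" using pow_eq_id[OF c] cp by simp
    moreover have "ord c \<noteq> 1" using ord_eq_1[OF c] c1 by simp
    ultimately show ?thesis using p by (metis prime_nat_iff)
  qed
  have conjw: "w [^] m \<otimes> a \<otimes> inv (w [^] m) = a \<otimes> c [^] m" for m :: nat
  proof (induction m)
    case 0
    then show ?case using a by simp
  next
    case (Suc m)
    have wm: "w [^] m \<in> E" using sub_pow_closed[OF sE wE] .
    have wmc: "w [^] m \<in> carrier P" using w by simp
    have wac: "w \<otimes> a \<otimes> inv w = a \<otimes> c"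
      unfolding c_def del_def using w a by (simp add: m_assoc)
    have cw: "c \<otimes> inv (w [^] m) = inv (w [^] m) \<otimes> c"
      using commE[OF cE subgroup.m_inv_closed[OF sE wm]] .
    have "w [^] Suc m \<otimes> a \<otimes> inv (w [^] Suc m) = w [^] m \<otimes> (w \<otimes> a \<otimes> inv w) \<otimes> inv (w [^] m)"
      using w a wmc by (simp add: m_assoc inv_mult_group)
    also have "\<dots> = w [^] m \<otimes> a \<otimes> (c \<otimes> inv (w [^] m))"
      using wac w a wmc c by (simp add: m_assoc)
    also have "\<dots> = (w [^] m \<otimes> a \<otimes> inv (w [^] m)) \<otimes> c"
      using cw w a wmc c by (simp add: m_assoc)
    also have "\<dots> = a \<otimes> c [^] Suc m" using Suc.IH a c by (simp add: m_assoc)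
    finally show ?case .
  qed
  have exK: "\<exists>k. a \<in> zeta P k" using zN a by blast
  define K where "K = (LEAST k. a \<in> zeta P k)"
  have aK: "a \<in> zeta P K" using LeastI_ex[OF exK] unfolding K_def .
  have K0: "K \<noteq> 0" using aK a1 by (cases K) auto
  define Z where "Z = zeta P (K - 1)"
  have sZ: "subgroup Z P" unfolding Z_def by (rule zeta_subgroup)
  have aZ: "a \<notin> Z"
  proof
    assume "a \<in> Z"
    then have "K \<le> K - 1" unfolding Z_def K_def by (rule Least_le)
    then show False using K0 by simp
  qed
  have K1: "inv a \<otimes> (g \<otimes> a \<otimes> inv g) \<in> Z" if g: "g \<in> carrier P" for g
  proof -
    have "a \<in> zeta P (Suc (K - 1))" using aK K0 by simp
    then have "\<forall>h\<in>carrier P. inv a \<otimes> inv h \<otimes> a \<otimes> h \<in> Z" unfolding Z_def by simp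
    then have "inv a \<otimes> inv (inv g) \<otimes> a \<otimes> inv g \<in> Z" using g by blast
    then show ?thesis using g a by (simp add: m_assoc)
  qed
  have K2: "c [^] m \<in> Z" for m :: nat
  proof -
    have "inv a \<otimes> (w [^] m \<otimes> a \<otimes> inv (w [^] m)) \<in> Z" using K1 w by simp
    then show ?thesis using conjw a c by simp
  qed
  have K3: "a [^] t \<notin> Z" if "0 < t" "t < p" for t :: nat
    using sub_pow_back[OF sZ a oa p that] aZ by blast
  have cl: "c [^] l \<in> carrier P" for l :: nat using c by simp
  have al: "a [^] l \<in> carrier P" for l :: nat using a by simp
  have mulf: "(a [^] i \<otimes> c [^] l) \<otimes> (a [^] i' \<otimes> c [^] l') = a [^] (i + i') \<otimes> c [^] (l + l')"
    for i l i' l' :: nat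
  proof -
    have eq: "c [^] l \<otimes> a [^] i' = a [^] i' \<otimes> c [^] l" using comm_pow[OF c a] ac by simp
    have "(a [^] i \<otimes> c [^] l) \<otimes> (a [^] i' \<otimes> c [^] l') = a [^] i \<otimes> ((c [^] l \<otimes> a [^] i') \<otimes> c [^] l')"
      using a c by (simp add: m_assoc)
    also have "\<dots> = a [^] i \<otimes> ((a [^] i' \<otimes> c [^] l) \<otimes> c [^] l')" using eq by simp
    also have "\<dots> = (a [^] i \<otimes> a [^] i') \<otimes> (c [^] l \<otimes> c [^] l')"
      using a c by (simp add: m_assoc)
    also have "\<dots> = a [^] (i + i') \<otimes> c [^] (l + l')"
      using a c by (simp add: nat_pow_mult)
    finally show ?thesis .
  qed
  define Xs where "Xs = (\<lambda>(i, l). a [^] i \<otimes> c [^] l) ` ({..<p} \<times> {..<p})"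
  have memX: "y \<in> Xs \<longleftrightarrow> (\<exists>i<p. \<exists>l<p. y = a [^] i \<otimes> c [^] l)" for y
    unfolding Xs_def by auto
  have inX: "a [^] i \<otimes> c [^] l \<in> Xs" for i l :: nat
  proof -
    have "a [^] i \<otimes> c [^] l = a [^] (i mod p) \<otimes> c [^] (l mod p)"
      using pow_mod_p[OF a ap] pow_mod_p[OF c cp] by metis
    moreover have "i mod p < p" "l mod p < p" using p1 by auto
    ultimately show ?thesis using memX by blast
  qed
  have XsC: "Xs \<subseteq> carrier P" unfolding Xs_def using a c by auto
  have sX: "subgroup Xs P"
  proof (rule subgroupI)
    show "Xs \<subseteq> carrier P" by (rule XsC)
    show "Xs \<noteq> {}" using inX by blast
  next
    fix y assume "y \<in> Xs"
    then obtain i l :: nat where il: "i < p" "l < p" "y = a [^] i \<otimes> c [^] l" using memX by blast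
    have "(a [^] (p - i) \<otimes> c [^] (p - l)) \<otimes> y = \<one>"
      using il mulf[of "p - i" "p - l" i l] ap cp by simp
    then have "inv y = a [^] (p - i) \<otimes> c [^] (p - l)"
      using il a c by (intro inv_equality) auto
    then show "inv y \<in> Xs" using inX by simp
  next
    fix y z assume "y \<in> Xs" "z \<in> Xs"
    then have yz: "y \<in> Xs" "z \<in> Xs" by auto
    obtain i l :: nat where "y = a [^] i \<otimes> c [^] l" using memX[THEN iffD1, OF yz(1)] by blast
    moreover obtain i' l' :: nat where "z = a [^] i' \<otimes> c [^] l'" using memX[THEN iffD1, OF yz(2)] by blast
    ultimately show "y \<otimes> z \<in> Xs" using mulf inX by simp
  qed
  have commX: "\<forall>x\<in>Xs. \<forall>y\<in>Xs. x \<otimes> y = y \<otimes> x"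
  proof (intro ballI)
    fix y z assume "y \<in> Xs" "z \<in> Xs"
    then have yz: "y \<in> Xs" "z \<in> Xs" by auto
    obtain i l :: nat where "y = a [^] i \<otimes> c [^] l" using memX[THEN iffD1, OF yz(1)] by blast
    moreover obtain i' l' :: nat where "z = a [^] i' \<otimes> c [^] l'" using memX[THEN iffD1, OF yz(2)] by blast
    ultimately show "y \<otimes> z = z \<otimes> y" using mulf by (simp add: add.commute)
  qed
  have expX: "\<forall>x\<in>Xs. x [^] p = \<one>"
  proof
    fix y assume "y \<in> Xs"
    then obtain i l :: nat where y: "y = a [^] i \<otimes> c [^] l" using memX by (meson memX)
    have "y [^] p = (a [^] i) [^] p \<otimes> (c [^] l) [^] p"
      unfolding y using comm_pow[OF a c] ac a c by (intro pow_mult_distrib) auto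
    also have "\<dots> = (a [^] p) [^] i \<otimes> (c [^] p) [^] l"
      using a c by (simp add: nat_pow_pow mult.commute)
    also have "\<dots> = \<one>" using ap cp by simp
    finally show "y [^] p = \<one>" .
  qed
  have elX: "elem_abelian_subgroup P p Xs"
    unfolding elem_abelian_subgroup_def using sX commX expX by blast
  have neq: "a [^] i \<otimes> c [^] l \<noteq> a [^] i' \<otimes> c [^] l'" if "i < i'" "i' < p" for i i' l l' :: nat
  proof
    assume e: "a [^] i \<otimes> c [^] l = a [^] i' \<otimes> c [^] l'"
    have "a [^] i' = a [^] i \<otimes> a [^] (i' - i)" using that a nat_pow_mult[of a i "i' - i"] by simp
    then have "a [^] i \<otimes> c [^] l = a [^] i \<otimes> (a [^] (i' - i) \<otimes> c [^] l')" using e a c by (simp add: m_assoc)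
    then have "c [^] l = a [^] (i' - i) \<otimes> c [^] l'" using a c by simp
    then have "a [^] (i' - i) = c [^] l \<otimes> inv (c [^] l')" using a c by (simp add: m_assoc)
    moreover have "c [^] l \<otimes> inv (c [^] l') \<in> Z"
      using K2 sZ by (simp add: subgroup.m_closed subgroup.m_inv_closed)
    moreover have "0 < i' - i" "i' - i < p" using that by auto
    ultimately show False using K3[of "i' - i"] by simp
  qed
  have injX: "inj_on (\<lambda>(i, l). a [^] i \<otimes> c [^] l) ({..<p} \<times> {..<p})"
  proof (rule inj_onI)
    fix u v assume u: "u \<in> {..<p} \<times> {..<p}" and v: "v \<in> {..<p} \<times> {..<p}"
      and e: "(\<lambda>(i, l). a [^] i \<otimes> c [^] l) u = (\<lambda>(i, l). a [^] i \<otimes> c [^] l) v"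
    obtain i l where ui: "u = (i, l)" by (cases u)
    obtain i' l' :: nat where vi: "v = (i', l')" by (cases v)
    have e': "a [^] i \<otimes> c [^] l = a [^] i' \<otimes> c [^] l'" using e ui vi by simp
    have "i = i'" using neq[of i i' l l'] neq[of i' i l' l] e' u v ui vi by (cases "i < i'"; cases "i' < i") auto
    then have "c [^] l = c [^] l'" using e' a c by simp
    then have "l = l'" using pow_inj_lt[OF c oc] u v ui vi by simp
    then show "u = v" using ui vi \<open>i = i'\<close> by simp
  qed
  have cardX: "card Xs = p ^ 2"
    unfolding Xs_def using card_image[OF injX] by (simp add: power2_eq_square)
  have conjX: "conj_class P a \<inter> Xs = (\<lambda>l. a \<otimes> c [^] l) ` {..<p}"
  proof
    show "conj_class P a \<inter> Xs \<subseteq> (\<lambda>l. a \<otimes> c [^] l) ` {..<p}"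
    proof
      fix y assume y: "y \<in> conj_class P a \<inter> Xs"
      then obtain g where g: "g \<in> carrier P" "y = g \<otimes> a \<otimes> inv g" unfolding conj_class_def by blast
      obtain i l :: nat where il: "i < p" "l < p" "y = a [^] i \<otimes> c [^] l" using y memX by blast
      have "inv a \<otimes> (a [^] i \<otimes> c [^] l) \<in> Z" using K1[OF g(1)] g il by simp
      then have "(inv a \<otimes> (a [^] i \<otimes> c [^] l)) \<otimes> inv (c [^] l) \<in> Z"
        using K2 sZ by (simp add: subgroup.m_closed subgroup.m_inv_closed)
      then have ia: "inv a \<otimes> a [^] i \<in> Z" using a c by (simp add: m_assoc)
      have "i = 1"
      proof (rule ccontr)
        assume i1: "i \<noteq> 1"
        show False
        proof (cases "i = 0")
          case True
          then have "inv a \<in> Z" using ia a by simp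
          then have "inv (inv a) \<in> Z" using sZ by (simp add: subgroup.m_inv_closed)
          then show False using aZ a by simp
        next
          case False
          then have "a [^] i = a \<otimes> a [^] (i - 1)" using a nat_pow_Suc2[of a "i - 1"] by simp
          then have "a [^] (i - 1) \<in> Z" using ia a by simp
          moreover have "0 < i - 1" "i - 1 < p" using False i1 il by auto
          ultimately show False using K3[of "i - 1"] by simp
        qed
      qed
      then show "y \<in> (\<lambda>l. a \<otimes> c [^] l) ` {..<p}" using il a by simp
    qed
  next
    show "(\<lambda>l. a \<otimes> c [^] l) ` {..<p} \<subseteq> conj_class P a \<inter> Xs"
    proof
      fix y assume "y \<in> (\<lambda>l. a \<otimes> c [^] l) ` {..<p}"
      then obtain l :: nat where l: "y = a \<otimes> c [^] l" by blast
      have "y = w [^] l \<otimes> a \<otimes> inv (w [^] l)" using conjw l by simp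
      then have "y \<in> conj_class P a" unfolding conj_class_def using w by blast
      moreover have "y \<in> Xs" using inX[of 1 l] a l by simp
      ultimately show "y \<in> conj_class P a \<inter> Xs" by blast
    qed
  qed
  have injC: "inj_on (\<lambda>l. a \<otimes> c [^] l) {..<p}"
  proof (rule inj_onI)
    fix l l' assume "l \<in> {..<p}" "l' \<in> {..<p}" "a \<otimes> c [^] l = a \<otimes> c [^] l'"
    then show "l = l'" using pow_inj_lt[OF c oc] a c by simp
  qed
  have cardC: "card (conj_class P a \<inter> Xs) = p"
    using conjX card_image[OF injC] by simp
  have cX: "c \<in> Xs" using inX[of 0 1] c by simp
  have cD: "c \<in> derived P (carrier P)"
  proof -
    have "c = inv a \<otimes> w \<otimes> inv (inv a) \<otimes> inv w" unfolding c_def del_def using a w by simp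
    then have "c \<in> derived_set P (carrier P)" using a w by blast
    then show ?thesis unfolding derived_def by (rule generate.incl)
  qed
  have "Xs \<inter> derived P (carrier P) \<noteq> {\<one>}" using cX cD c1 by blast
  then show ?thesis using elX cardX cardC by blast
qed


end
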